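(* Fix a cell with energy $E>0$ carried by an initial finite population of particles with positive weights summing to $E$, a source energy $S>0$, and a positive integer $N_{obj}$, and suppose that $\frac{S N_{obj}}{E+S}\in\mathbb{N}$ and that $N^{vol}>1$, where $w_{obj}=(E+S)/N_{obj}$ and $N^{vol}=\max(1,\lfloor S/w_{obj}\rfloor)$. Consider the following iterative procedure on two populations: the $N^{vol}$ volumic (emitted) particles each have weight $S/N^{vol}$ and are never modified; at each iteration $l$, the current non-volumic population of $N^{ini}_l$ particles undergoes Russian Roulette and non-conservative Splitting with target weight $w_{obj}$ (as described in the context, with fresh independent uniform random variables), after which the non-volumic particles are rescaled by a common factor so that the total mass of all particles (volumic and non-volumic) equals $E+S$ (if no non-volumic particle survives, they are replaced by a single particle of weight $E$). Let $N^l=N^{vol}+N^{ini}_l$ be the number of particles at iteration $l$. Then $\lim_{l\to\infty}\mathbb{P}[N^l=N_{obj}]=1$; more precisely, there exists $\lambda>0$ such that $\mathbb{P}(N^l\neq N_{obj})\le e^{-l\lambda}$.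
   Context: Russian Roulette and non-conservative Splitting with target weight $w_{obj}>0$ applied to a population of particles with positive weights: for each particle $p$ of weight $w_p$ draw independently $u_p\sim\mathcal U(0,1)$, set $I_p=\lfloor w_p/w_{obj}\rfloor$, $R_p=w_p/w_{obj}-I_p$. If $I_p=0$, the particle is killed if $R_p<u_p$ and otherwise its weight becomes $w_{obj}$. If $I_p\ge1$, with $N^{split}_p=I_p+\mathbf 1_{\{u_p<R_p\}}$, the particle is replaced by $N^{split}_p$ copies each of weight $w_{obj}$. *)

theory Defs
  imports "HOL-Probability.Probability"
begin

definition wobj :: "real \<Rightarrow> real \<Rightarrow> nat \<Rightarrow> real" where
  "wobj E S Nobj = (E + S) / real Nobj"

definition Nvol :: "real \<Rightarrow> real \<Rightarrow> nat \<Rightarrow> nat" where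
  "Nvol E S Nobj = max 1 (nat \<lfloor>S / wobj E S Nobj\<rfloor>)"

definition rr_split :: "real \<Rightarrow> real \<Rightarrow> real \<Rightarrow> real list" where
  "rr_split wo u w =
     (let I = nat \<lfloor>w / wo\<rfloor>; R = w / wo - real I in
      if I = 0 then (if R < u then [] else [wo])
      else replicate (I + (if u < R then 1 else 0)) wo)"

text \<open>One iteration on the non-volumic population ws: particle number p uses the
  uniform draw us p; afterwards the non-volumic particles are rescaled by a common
  factor so that the total mass (volumic mass nv * (S/nv) included) is E + S; if no
  particle survives, the population is replaced by a single particle of weight E.\<close>
definition rr_step :: "real \<Rightarrow> real \<Rightarrow> real \<Rightarrow> nat \<Rightarrow> (nat \<Rightarrow> real) \<Rightarrow> real list \<Rightarrow> real list" where
  "rr_step wo E S nv us ws =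
     (let ws' = concat (map (\<lambda>(p, w). rr_split wo (us p) w) (zip [0..<length ws] ws))
      in if ws' = [] then [E]
         else map (\<lambda>x. x * ((E + S - real nv * (S / real nv)) / sum_list ws')) ws')"

text \<open>Non-volumic population after l iterations, driven by the draws u l p
  (iteration l, particle p).\<close>
primrec population :: "real \<Rightarrow> real \<Rightarrow> nat \<Rightarrow> real list \<Rightarrow> (nat \<Rightarrow> nat \<Rightarrow> real) \<Rightarrow> nat \<Rightarrow> real list" where
  "population E S Nobj ws0 u 0 = ws0"
| "population E S Nobj ws0 u (Suc l) =
     rr_step (wobj E S Nobj) E S (Nvol E S Nobj) (u l) (population E S Nobj ws0 u l)"

end

theory Submission imports Defs begin

definition cnt :: "real \<Rightarrow> (nat \<Rightarrow> real) \<Rightarrow> real list \<Rightarrow> nat" where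
  "cnt wo u b = (\<Sum>p<length b. length (rr_split wo (u p) (b!p)))"

definition hh :: "real \<Rightarrow> nat \<Rightarrow> real list" where
  "hh E n = (if n = 0 then [E] else replicate n (E / real n))"

definition II :: "real \<Rightarrow> real \<Rightarrow> nat" where "II wo w = nat \<lfloor>w / wo\<rfloor>"
definition RR :: "real \<Rightarrow> real \<Rightarrow> real" where "RR wo w = w / wo - real (II wo w)"

lemma len_split: "length (rr_split wo u w) =
  (if II wo w = 0 then (if RR wo w < u then 0 else 1) else II wo w + (if u < RR wo w then 1 else 0))"
  unfolding rr_split_def II_def RR_def Let_def by auto

lemma set_split: "x \<in> set (rr_split wo u w) \<Longrightarrow> x = wo"
  unfolding rr_split_def Let_def by (auto split: if_splits)

lemma RR_bounds: assumes "wo > 0" "w > 0" shows "0 \<le> RR wo w" "RR wo w < 1"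
  "real (II wo w) \<le> w / wo" "real (II wo w) + RR wo w = w / wo"
proof -
  have "w / wo > 0" using assms by simp
  then have e: "real (II wo w) = of_int \<lfloor>w / wo\<rfloor>" unfolding II_def by simp
  show "0 \<le> RR wo w" "RR wo w < 1" "real (II wo w) \<le> w / wo" "real (II wo w) + RR wo w = w / wo"
    unfolding RR_def e by (auto simp: of_int_floor_le) linarith
qed

lemma len_split_le: "length (rr_split wo u w) \<le> II wo w + 1"
  by (simp add: len_split)

lemma len_split_lo: "0 < u \<Longrightarrow> u < RR wo w \<Longrightarrow> length (rr_split wo u w) = II wo w + 1"
  by (simp add: len_split)
lemma len_split_hi: "RR wo w < u \<Longrightarrow> length (rr_split wo u w) = II wo w"
  by (simp add: len_split)

lemma concat_len:
  "length (concat (map (\<lambda>(p, w). rr_split wo (us p) w) (zip [0..<length ws] ws))) = cnt wo us ws"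
  unfolding cnt_def length_concat
  by (simp add: sum_list_sum_nth atLeast0LessThan)

lemma rr_step_eq:
  assumes "wo > 0" "nv > 0"
  shows "rr_step wo E S nv us ws = hh E (cnt wo us ws)"
proof -
  let ?c = "concat (map (\<lambda>(p, w). rr_split wo (us p) w) (zip [0..<length ws] ws))"
  have "\<forall>y\<in>set ?c. y = wo" using set_split by fastforce
  then have r: "?c = replicate (cnt wo us ws) wo"
    using replicate_length_same[of ?c wo] concat_len[of wo us ws] by simp
  have e: "E + S - real nv * (S / real nv) = E" using assms by simp
  show ?thesis
    unfolding rr_step_def Let_def r e hh_def using assms
    by (auto simp: sum_list_replicate)
qed

lemma pop_Suc:
  assumes "wobj E S Nobj > 0"
  shows "population E S Nobj ws0 u (Suc l) = hh E (cnt (wobj E S Nobj) (u l) (population E S Nobj ws0 u l))"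
  using rr_step_eq[OF assms, of "Nvol E S Nobj"] by (simp add: Nvol_def)

lemma pop_dep: "(\<forall>j<l. u j = u' j) \<Longrightarrow> population E S Nobj ws0 u l = population E S Nobj ws0 u' l"
  by (induction l) auto


lemma cnt_le_general:
  assumes "wo > 0" "\<forall>w\<in>set b. w > 0"
  shows "real (cnt wo u b) \<le> sum_list b / wo + length b"
proof -
  have "real (cnt wo u b) \<le> (\<Sum>p<length b. real (II wo (b!p)) + 1)"
    unfolding cnt_def of_nat_sum
    by (rule sum_mono) (metis len_split_le of_nat_1 of_nat_add of_nat_mono)
  also have "\<dots> \<le> (\<Sum>p<length b. b!p / wo + 1)"
    by (rule sum_mono) (use RR_bounds(3)[OF assms(1)] assms(2) in \<open>auto\<close>)
  also have "\<dots> = sum_list b / wo + length b"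
    by (simp add: sum.distrib sum_divide_distrib[symmetric] sum_list_sum_nth atLeast0LessThan)
  finally show ?thesis .
qed

lemma cnt_le_rep:
  shows "cnt wo u (replicate n c) \<le> n * (II wo c + 1)"
    and "II wo c = 0 \<Longrightarrow> cnt wo u (replicate n c) \<le> n"
proof -
  have "cnt wo u (replicate n c) \<le> (\<Sum>p<n. II wo c + 1)"
    unfolding cnt_def length_replicate by (rule sum_mono) (use len_split_le in auto)
  then show "cnt wo u (replicate n c) \<le> n * (II wo c + 1)" by simp
  then show "II wo c = 0 \<Longrightarrow> cnt wo u (replicate n c) \<le> n" by simp
qed

definition S0 :: "real \<Rightarrow> nat \<Rightarrow> real list \<Rightarrow> real list set" where
  "S0 E K ws0 = insert ws0 (hh E ` {..2 * K + length ws0})"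

lemma S0_finite: "finite (S0 E K ws0)" unfolding S0_def by simp

lemma S0_props:
  assumes "wo > 0" "E = real K * wo" "K \<ge> 1" "\<forall>w\<in>set ws0. w > 0" "sum_list ws0 = E"
    and "b \<in> S0 E K ws0"
  shows "(\<forall>w\<in>set b. w > 0) \<and> sum_list b = E \<and> b \<noteq> []"
proof -
  have E: "E > 0" using assms by simp
  show ?thesis using assms(6) E assms(4,5) unfolding S0_def hh_def
    by (auto simp: sum_list_replicate)
qed

lemma cnt_S0:
  assumes "wo > 0" "E = real K * wo" "K \<ge> 1" "\<forall>w\<in>set ws0. w > 0" "sum_list ws0 = E"
    and "b \<in> S0 E K ws0"
  shows "cnt wo u b \<le> 2 * K + length ws0"
proof -
  have E: "E > 0" using assms by simp
  have sE: "sum_list b / wo = K" if "sum_list b = E" using that assms(1,2) by simp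
  consider "b = ws0" | "b = [E]" | n where "n \<ge> 1" "n \<le> 2 * K + length ws0" "b = replicate n (E / n)"
    using assms(6) unfolding S0_def hh_def by (auto split: if_splits)
  then show ?thesis
  proof cases
    case 1
    then have "real (cnt wo u b) \<le> K + length ws0"
      using cnt_le_general[OF assms(1), of b u] assms(4,5) sE by simp
    then show ?thesis by linarith
  next
    case 2
    then have "real (cnt wo u b) \<le> K + 1"
      using cnt_le_general[OF assms(1), of b u] E sE by simp
    then show ?thesis using assms(3) by linarith
  next
    case 3
    show ?thesis
    proof (cases "II wo (E / n) = 0")
      case True
      then show ?thesis using cnt_le_rep(2)[of wo "E/n" u n] 3 by simp
    next
      case False
      have "real (II wo (E / n)) \<le> E / n / wo"
        using RR_bounds(3)[OF assms(1), of "E/n"] E 3 by simp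
      also have "\<dots> = K / n" using assms(1,2) by (simp add: field_simps)
      finally have "real n * real (II wo (E / n)) \<le> K" using 3 by (simp add: field_simps)
      then have a: "n * II wo (E / n) \<le> K" by (simp flip: of_nat_mult)
      have "n * 1 \<le> n * II wo (E / n)" using False by (intro mult_le_mono2) simp
      then have "n \<le> K" using a by linarith
      have c: "cnt wo u b \<le> n * II wo (E / n) + n" using cnt_le_rep(1)[of wo u n "E/n"] 3 by simp
      have "n * II wo (E / n) + n \<le> K + K" using a \<open>n \<le> K\<close> by (rule add_mono)
      then show ?thesis using c by linarith
    qed
  qed
qed

lemma pop_S0:
  assumes "wobj E S Nobj > 0" "E = real K * wobj E S Nobj" "K \<ge> 1" "\<forall>w\<in>set ws0. w > 0" "sum_list ws0 = E"
  shows "population E S Nobj ws0 u l \<in> S0 E K ws0"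
proof (induction l)
  case 0
  then show ?case by (simp add: S0_def)
next
  case (Suc l)
  show ?case unfolding pop_Suc[OF assms(1)]
    using cnt_S0[OF assms Suc] by (simp add: S0_def)
qed


definition Tsel :: "real \<Rightarrow> nat \<Rightarrow> real list \<Rightarrow> nat set" where
  "Tsel wo K b = (SOME T. T \<subseteq> {p. p < length b \<and> RR wo (b!p) > 0}
      \<and> card T = K - (\<Sum>p<length b. II wo (b!p)))"

definition piv :: "real \<Rightarrow> nat \<Rightarrow> real list \<Rightarrow> real" where
  "piv wo K b = (\<Prod>p<length b. (if p \<in> Tsel wo K b then RR wo (b!p) else 1 - RR wo (b!p)))"

lemma Tsel_prop:
  assumes "wo > 0" "\<forall>w\<in>set b. w > 0" "sum_list b = real K * wo"
  shows "Tsel wo K b \<subseteq> {p. p < length b \<and> RR wo (b!p) > 0}"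
    "card (Tsel wo K b) = K - (\<Sum>p<length b. II wo (b!p))"
    "(\<Sum>p<length b. II wo (b!p)) \<le> K"
proof -
  let ?n = "length b"
  let ?P = "{p. p < length b \<and> RR wo (b!p) > 0}"
  have bp: "\<And>p. p < ?n \<Longrightarrow> b!p > 0" using assms(2) by auto
  have "(\<Sum>p<?n. real (II wo (b!p)) + RR wo (b!p)) = (\<Sum>p<?n. b!p / wo)"
    by (rule sum.cong) (auto simp: RR_bounds(4)[OF assms(1) bp])
  also have "\<dots> = K" using assms(1,3)
    by (simp add: sum_divide_distrib[symmetric] sum_list_sum_nth atLeast0LessThan)
  finally have eq: "real (\<Sum>p<?n. II wo (b!p)) + (\<Sum>p<?n. RR wo (b!p)) = K"
    by (simp add: sum.distrib)
  have "(\<Sum>p<?n. RR wo (b!p)) \<ge> 0" by (rule sum_nonneg) (use RR_bounds(1)[OF assms(1) bp] in auto)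
  then show le: "(\<Sum>p<?n. II wo (b!p)) \<le> K" using eq by linarith
  have z: "RR wo (b!p) = 0" if "p \<in> {..<?n} - ?P" for p
    using that RR_bounds(1)[OF assms(1) bp[of p]] by simp
  have "(\<Sum>p<?n. RR wo (b!p)) = (\<Sum>p\<in>?P. RR wo (b!p))"
    by (rule sum.mono_neutral_right) (use z in auto)
  also have "\<dots> \<le> (\<Sum>p\<in>?P. 1)"
  proof (rule sum_mono)
    fix p assume "p \<in> ?P"
    then have "RR wo (b!p) < 1" using RR_bounds(2)[OF assms(1) bp[of p]] by simp
    then show "RR wo (b!p) \<le> 1" by simp
  qed
  finally have s1: "(\<Sum>p<?n. RR wo (b!p)) \<le> real (card ?P)" by simp
  have s2: "real (K - (\<Sum>p<?n. II wo (b!p))) = real K - real (\<Sum>p<?n. II wo (b!p))"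
    using le by (rule of_nat_diff)
  have "real (K - (\<Sum>p<?n. II wo (b!p))) \<le> card ?P" using s1 s2 eq by linarith
  then have "K - (\<Sum>p<?n. II wo (b!p)) \<le> card ?P" by linarith
  then obtain T where "T \<subseteq> ?P" "card T = K - (\<Sum>p<?n. II wo (b!p))"
    by (rule obtain_subset_with_card_n)
  then have "\<exists>T. T \<subseteq> ?P \<and> card T = K - (\<Sum>p<?n. II wo (b!p))" by (intro exI conjI)
  from someI_ex[OF this] show "Tsel wo K b \<subseteq> ?P" "card (Tsel wo K b) = K - (\<Sum>p<?n. II wo (b!p))"
    unfolding Tsel_def by auto
qed

lemma hit:
  assumes "wo > 0" "\<forall>w\<in>set b. w > 0" "sum_list b = real K * wo"
    and u: "\<And>p. p < length b \<Longrightarrow> (if p \<in> Tsel wo K b then 0 < u p \<and> u p < RR wo (b!p)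
                                   else RR wo (b!p) < u p)"
  shows "cnt wo u b = K"
proof -
  let ?T = "Tsel wo K b"
  note T = Tsel_prop[OF assms(1-3)]
  have "cnt wo u b = (\<Sum>p<length b. II wo (b!p) + (if p \<in> ?T then 1 else 0))"
    unfolding cnt_def
  proof (rule sum.cong)
    fix p assume "p \<in> {..<length b}"
    then show "length (rr_split wo (u p) (b!p)) = II wo (b!p) + (if p \<in> ?T then 1 else 0)"
      using u[of p] len_split_lo len_split_hi by (auto split: if_splits)
  qed simp
  also have "\<dots> = (\<Sum>p<length b. II wo (b!p)) + card ?T"
    using T(1) by (simp add: sum.distrib sum.If_cases Int_absorb1 subset_eq)
  finally show ?thesis using T(2,3) by simp
qed

lemma piv_bounds:
  assumes "wo > 0" "\<forall>w\<in>set b. w > 0" "sum_list b = real K * wo"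
  shows "piv wo K b > 0" "piv wo K b \<le> 1"
proof -
  note T = Tsel_prop[OF assms(1-3)]
  have bp: "\<And>p. p < length b \<Longrightarrow> b!p > 0" using assms(2) by auto
  show "piv wo K b > 0" unfolding piv_def
    by (rule prod_pos) (use T(1) RR_bounds(2)[OF assms(1) bp] in auto)
  show "piv wo K b \<le> 1" unfolding piv_def
  proof (rule prod_le_1)
    fix p assume "p \<in> {..<length b}"
    then have "RR wo (b!p) < 1" "RR wo (b!p) \<ge> 0" using RR_bounds(1,2)[OF assms(1) bp[of p]] by simp_all
    then show "0 \<le> (if p \<in> Tsel wo K b then RR wo (b!p) else 1 - RR wo (b!p)) \<and>
      (if p \<in> Tsel wo K b then RR wo (b!p) else 1 - RR wo (b!p)) \<le> 1" by auto
  qed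
qed

lemma piv_rep:
  assumes "wo > 0" "K \<ge> 1"
  shows "piv wo K (replicate K wo) = 1"
proof -
  have R: "RR wo wo = 0" using assms unfolding RR_def II_def by simp
  have "Tsel wo K (replicate K wo) = {}"
    using Tsel_prop(1)[OF assms(1), of "replicate K wo" K] assms R by (auto simp: sum_list_replicate)
  then show ?thesis unfolding piv_def using R by simp
qed


lemma len_split_meas:
  assumes "u \<in> borel_measurable N"
  shows "(\<lambda>x. length (rr_split wo (u x) w)) \<in> measurable N (count_space UNIV)"
  unfolding len_split by (use assms in measurable)

lemma cnt_meas:
  assumes "\<And>p. V p \<in> borel_measurable N"
  shows "(\<lambda>x. cnt wo (\<lambda>p. V p x) b) \<in> measurable N (count_space UNIV)"
  unfolding cnt_def by (use assms len_split_meas in measurable)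


lemma hh_cnt_meas:
  assumes "wo > 0" "E = real K * wo" "K \<ge> 1" "\<forall>w\<in>set ws0. w > 0" "sum_list ws0 = E"
    and "b \<in> S0 E K ws0" and "\<And>p. V p \<in> borel_measurable N"
  shows "(\<lambda>x. hh E (cnt wo (\<lambda>p. V p x) b)) \<in> measurable N (count_space (S0 E K ws0))"
proof -
  have c: "(\<lambda>x. cnt wo (\<lambda>p. V p x) b) \<in> measurable N (count_space UNIV)"
    by (rule cnt_meas) (rule assms(7))
  show ?thesis
    unfolding measurable_count_space_eq_countable[OF countable_finite[OF S0_finite]]
  proof safe
    fix x show "hh E (cnt wo (\<lambda>p. V p x) b) \<in> S0 E K ws0"
      using cnt_S0[OF assms(1-6)] unfolding S0_def by auto
  next
    fix a
    have "(\<lambda>x. hh E (cnt wo (\<lambda>p. V p x) b)) -` {a} \<inter> space N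
        = (\<lambda>x. cnt wo (\<lambda>p. V p x) b) -` {k. hh E k = a} \<inter> space N" by auto
    also have "\<dots> \<in> sets N" using measurable_sets[OF c, of "{k. hh E k = a}"] by simp
    finally show "(\<lambda>x. hh E (cnt wo (\<lambda>p. V p x) b)) -` {a} \<inter> space N \<in> sets N" .
  qed
qed

lemma pop_meas:
  assumes "wobj E S Nobj > 0" "E = real K * wobj E S Nobj" "K \<ge> 1" "\<forall>w\<in>set ws0. w > 0" "sum_list ws0 = E"
    and "\<And>j p. V j p \<in> borel_measurable N"
  shows "(\<lambda>x. population E S Nobj ws0 (\<lambda>j p. V j p x) l) \<in> measurable N (count_space (S0 E K ws0))"
proof (induction l)
  case 0
  show ?case by (simp add: S0_def)
next
  case (Suc l)
  show ?case
    unfolding pop_Suc[OF assms(1)]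
    by (rule measurable_compose_countable'[OF _ Suc countable_finite[OF S0_finite],
          where f="\<lambda>b x. hh E (cnt (wobj E S Nobj) (\<lambda>p. V l p x) b)"])
       (rule hh_cnt_meas[OF assms(1-5)], auto intro: assms(6))
qed


locale rrsetup = prob_space M for M :: "'a measure" +
  fixes U :: "nat \<Rightarrow> nat \<Rightarrow> 'a \<Rightarrow> real"
  assumes indep: "indep_vars (\<lambda>_. borel) (\<lambda>i. U (fst i) (snd i)) UNIV"
    and unif: "\<And>l p. distr M borel (U l p) = uniform_measure lborel {0<..<1}"
begin

lemma U_meas[measurable]: "U l p \<in> borel_measurable M"
proof -
  have "random_variable borel ((\<lambda>i. U (fst i) (snd i)) (l, p))"
    using indep unfolding indep_vars_def2 by blast
  then show ?thesis by simp
qed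

lemma prob_U:
  assumes "J \<in> sets borel" "J \<subseteq> {0<..<1}"
  shows "prob (U l p -` J \<inter> space M) = measure lborel J"
proof -
  have "prob (U l p -` J \<inter> space M) = measure (distr M borel (U l p)) J"
    using assms(1) by (simp add: measure_distr)
  also have "\<dots> = measure (uniform_measure lborel {0<..<1}) J" by (simp add: unif)
  also have "\<dots> = measure lborel ({0<..<1} \<inter> J) / measure lborel {0<..<(1::real)}"
    using assms(1) by (subst measure_uniform_measure) auto
  also have "\<dots> = measure lborel J" using assms(2) by (simp add: Int_absorb1)
  finally show ?thesis .
qed

lemma prob_prod:
  assumes "0 < n" "\<And>p. J p \<in> sets borel"
  shows "prob (\<Inter>p\<in>{..<n}. U l p -` J p \<inter> space M) = (\<Prod>p<n. prob (U l p -` J p \<inter> space M))"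
proof -
  have I: "indep_sets (\<lambda>i. {(\<lambda>\<omega>. U (fst i) (snd i) \<omega>) -` A \<inter> space M | A. A \<in> sets borel}) UNIV"
    using indep unfolding indep_vars_def2 by simp
  define A where "A i = U (fst i) (snd i) -` J (snd i) \<inter> space M" for i
  have "prob (\<Inter>i\<in>Pair l ` {..<n}. A i) = (\<Prod>i\<in>Pair l ` {..<n}. prob (A i))"
    by (rule indep_setsD[OF I]) (use assms in \<open>auto simp: A_def\<close>)
  then show ?thesis by (simp add: A_def prod.reindex inj_on_def image_image)
qed

lemma hit_prob:
  assumes "wo > 0" "\<forall>w\<in>set b. w > 0" "sum_list b = real K * wo" "b \<noteq> []"
  shows "prob {\<omega>\<in>space M. cnt wo (\<lambda>p. U l p \<omega>) b = K} \<ge> piv wo K b"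
proof -
  let ?n = "length b"
  let ?T = "Tsel wo K b"
  note T = Tsel_prop[OF assms(1-3)]
  have bp: "\<And>p. p < ?n \<Longrightarrow> b!p > 0" using assms(2) by auto
  define J where "J p = (if p \<in> ?T then {0<..<RR wo (b!p)} else {RR wo (b!p)<..<1})" for p
  have Jb: "J p \<in> sets borel" for p unfolding J_def by simp
  have sub: "(\<Inter>p\<in>{..<?n}. U l p -` J p \<inter> space M) \<subseteq> {\<omega>\<in>space M. cnt wo (\<lambda>p. U l p \<omega>) b = K}"
  proof
    fix \<omega> assume w: "\<omega> \<in> (\<Inter>p\<in>{..<?n}. U l p -` J p \<inter> space M)"
    have "0 \<in> {..<?n}" using assms(4) by simp
    then have "\<omega> \<in> space M" using w by blast
    moreover have "cnt wo (\<lambda>p. U l p \<omega>) b = K"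
      by (rule hit[OF assms(1-3)]) (use w in \<open>auto simp: J_def split: if_splits\<close>)
    ultimately show "\<omega> \<in> {\<omega>\<in>space M. cnt wo (\<lambda>p. U l p \<omega>) b = K}" by simp
  qed
  have cm: "(\<lambda>\<omega>. cnt wo (\<lambda>p. U l p \<omega>) b) \<in> measurable M (count_space UNIV)"
    by (rule cnt_meas) simp
  have "{\<omega>\<in>space M. cnt wo (\<lambda>p. U l p \<omega>) b = K} = (\<lambda>\<omega>. cnt wo (\<lambda>p. U l p \<omega>) b) -` {K} \<inter> space M"
    by auto
  then have ms: "{\<omega>\<in>space M. cnt wo (\<lambda>p. U l p \<omega>) b = K} \<in> sets M"
    using measurable_sets[OF cm, of "{K}"] by simp
  have "prob (\<Inter>p\<in>{..<?n}. U l p -` J p \<inter> space M) = (\<Prod>p<?n. prob (U l p -` J p \<inter> space M))"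
    using assms(4) Jb by (intro prob_prod) auto
  also have "\<dots> = (\<Prod>p<?n. measure lborel (J p))"
  proof (rule prod.cong)
    fix p assume "p \<in> {..<?n}"
    then have "RR wo (b!p) \<ge> 0" "RR wo (b!p) < 1" using RR_bounds(1,2)[OF assms(1) bp[of p]] by auto
    then have "J p \<subseteq> {0<..<1}" unfolding J_def by auto
    then show "prob (U l p -` J p \<inter> space M) = measure lborel (J p)" using Jb by (intro prob_U)
  qed simp
  also have "\<dots> = piv wo K b" unfolding piv_def
  proof (rule prod.cong)
    fix p assume "p \<in> {..<?n}"
    then have "RR wo (b!p) \<ge> 0" "RR wo (b!p) < 1" using RR_bounds(1,2)[OF assms(1) bp[of p]] by auto
    then show "measure lborel (J p) = (if p \<in> ?T then RR wo (b!p) else 1 - RR wo (b!p))"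
      unfolding J_def by auto
  qed simp
  finally have "prob (\<Inter>p\<in>{..<?n}. U l p -` J p \<inter> space M) = piv wo K b" .
  moreover have "prob (\<Inter>p\<in>{..<?n}. U l p -` J p \<inter> space M) \<le> prob {\<omega>\<in>space M. cnt wo (\<lambda>p. U l p \<omega>) b = K}"
    by (rule finite_measure_mono[OF sub ms])
  ultimately show ?thesis by simp
qed


lemma indep_step:
  assumes "wobj E S Nobj > 0" "E = real K * wobj E S Nobj" "K \<ge> 1" "\<forall>w\<in>set ws0. w > 0" "sum_list ws0 = E"
    and b: "b \<in> S0 E K ws0"
  shows "prob ({\<omega>\<in>space M. population E S Nobj ws0 (\<lambda>j p. U j p \<omega>) l = b}
                \<inter> {\<omega>\<in>space M. cnt wo (\<lambda>p. U l p \<omega>) b \<noteq> K'})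
       = prob {\<omega>\<in>space M. population E S Nobj ws0 (\<lambda>j p. U j p \<omega>) l = b}
         * prob {\<omega>\<in>space M. cnt wo (\<lambda>p. U l p \<omega>) b \<noteq> K'}"
proof -
  define Kf where "Kf = (\<lambda>c::bool. if c then {i::nat\<times>nat. fst i < l} else {i. fst i = l})"
  define Y where "Y c \<omega> = restrict (\<lambda>i. U (fst i) (snd i) \<omega>) (Kf c)" for c \<omega>
  have ind2: "indep_vars (\<lambda>c. PiM (Kf c) (\<lambda>_. borel)) Y UNIV"
    unfolding Y_def by (rule indep_vars_restrict[OF indep]) (auto simp: disjoint_family_on_def Kf_def)
  then have I2: "indep_sets (\<lambda>c. {Y c -` A \<inter> space M | A. A \<in> sets (PiM (Kf c) (\<lambda>_. borel))}) UNIV"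
    unfolding indep_vars_def2 by simp
  define \<Phi> where "\<Phi> y = population E S Nobj ws0 (\<lambda>j p. (\<lambda>y. if j < l then y (j, p) else 0) y) l" for y :: "nat \<times> nat \<Rightarrow> real"
  have Vm: "(\<lambda>y. if j < l then y (j, p) else 0) \<in> borel_measurable (PiM (Kf True) (\<lambda>_. borel))" for j p
  proof (cases "j < l")
    case True
    then have "(j, p) \<in> Kf True" by (simp add: Kf_def)
    then show ?thesis using True measurable_component_singleton[of "(j,p)" "Kf True" "\<lambda>_. borel"] by simp
  qed simp
  have \<Phi>m: "\<Phi> \<in> measurable (PiM (Kf True) (\<lambda>_. borel)) (count_space (S0 E K ws0))"
    unfolding \<Phi>_def by (rule pop_meas[OF assms(1-5)]) (rule Vm)
  define \<Psi> where "\<Psi> y = cnt wo (\<lambda>p. (\<lambda>y. y (l, p)) y) b" for y :: "nat \<times> nat \<Rightarrow> real"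
  have Wm: "(\<lambda>y. y (l, p)) \<in> borel_measurable (PiM (Kf False) (\<lambda>_. borel))" for p
    by (rule measurable_component_singleton) (simp add: Kf_def)
  have \<Psi>m: "\<Psi> \<in> measurable (PiM (Kf False) (\<lambda>_. borel)) (count_space UNIV)"
    unfolding \<Psi>_def by (rule cnt_meas) (rule Wm)
  define A1 where "A1 = \<Phi> -` {b} \<inter> space (PiM (Kf True) (\<lambda>_. borel))"
  define A2 where "A2 = \<Psi> -` {k. k \<noteq> K'} \<inter> space (PiM (Kf False) (\<lambda>_. borel))"
  have A1s: "A1 \<in> sets (PiM (Kf True) (\<lambda>_. borel))"
    unfolding A1_def by (rule measurable_sets[OF \<Phi>m]) (use b in simp)
  have A2s: "A2 \<in> sets (PiM (Kf False) (\<lambda>_. borel))"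
    unfolding A2_def by (rule measurable_sets[OF \<Psi>m]) simp
  have Ysp: "Y c \<omega> \<in> space (PiM (Kf c) (\<lambda>_. borel))" for c \<omega>
    unfolding Y_def space_PiM by auto
  have e1: "{\<omega>\<in>space M. population E S Nobj ws0 (\<lambda>j p. U j p \<omega>) l = b} = Y True -` A1 \<inter> space M"
  proof -
    have "\<Phi> (Y True \<omega>) = population E S Nobj ws0 (\<lambda>j p. U j p \<omega>) l" for \<omega>
      unfolding \<Phi>_def by (rule pop_dep) (auto simp: Y_def Kf_def)
    then show ?thesis unfolding A1_def using Ysp by auto
  qed
  have e2: "{\<omega>\<in>space M. cnt wo (\<lambda>p. U l p \<omega>) b \<noteq> K'} = Y False -` A2 \<inter> space M"
  proof -
    have "\<Psi> (Y False \<omega>) = cnt wo (\<lambda>p. U l p \<omega>) b" for \<omega>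
      unfolding \<Psi>_def by (simp add: Y_def Kf_def)
    then show ?thesis unfolding A2_def using Ysp by auto
  qed
  define AA where "AA c = (if c then Y True -` A1 \<inter> space M else Y False -` A2 \<inter> space M)" for c
  have "prob (\<Inter>c\<in>UNIV. AA c) = (\<Prod>c\<in>UNIV. prob (AA c))"
    by (rule indep_setsD[OF I2]) (use A1s A2s in \<open>auto simp: AA_def\<close>)
  then show ?thesis unfolding e1 e2 by (simp add: UNIV_bool AA_def Int_commute)
qed

lemma main_bound:
  assumes wo: "wobj E S Nobj > 0" and EK: "E = real K * wobj E S Nobj" and K1: "K \<ge> 1"
    and pos: "\<forall>w\<in>set ws0. w > 0" and sm: "sum_list ws0 = E"
  defines "q \<equiv> Max ((\<lambda>b. 1 - piv (wobj E S Nobj) K b) ` S0 E K ws0)"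
  shows "0 \<le> q" "q < 1"
    "\<And>l. prob {\<omega>\<in>space M. population E S Nobj ws0 (\<lambda>j p. U j p \<omega>) l \<noteq> hh E K} \<le> q ^ l"
proof -
  let ?wo = "wobj E S Nobj"
  let ?S0 = "S0 E K ws0"
  let ?P = "\<lambda>l \<omega>. population E S Nobj ws0 (\<lambda>j p. U j p \<omega>) l"
  note ax = wo EK K1 pos sm
  have bprops: "\<And>b. b \<in> ?S0 \<Longrightarrow> (\<forall>w\<in>set b. w > 0) \<and> sum_list b = real K * ?wo \<and> b \<noteq> []"
    using S0_props[OF ax] EK by simp
  have pivb: "\<And>b. b \<in> ?S0 \<Longrightarrow> 0 < piv ?wo K b \<and> piv ?wo K b \<le> 1"
    using piv_bounds[OF wo] bprops by blast
  have fin: "finite ((\<lambda>b. 1 - piv ?wo K b) ` ?S0)" using S0_finite by simp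
  have ne: "ws0 \<in> ?S0" by (simp add: S0_def)
  have qge: "\<And>b. b \<in> ?S0 \<Longrightarrow> 1 - piv ?wo K b \<le> q" unfolding q_def using fin by (intro Max_ge) auto
  show q0: "0 \<le> q" using qge[OF ne] pivb[OF ne] by linarith
  show "q < 1" unfolding q_def using fin ne pivb by (subst Max_less_iff) auto
  have hK: "hh E K = replicate K ?wo" using K1 EK wo by (simp add: hh_def field_simps)
  have hKS: "hh E K \<in> ?S0" unfolding S0_def by auto
  have pivK: "piv ?wo K (hh E K) = 1" unfolding hK by (rule piv_rep[OF wo K1])
  have Pm: "(\<lambda>\<omega>. ?P l \<omega>) \<in> measurable M (count_space ?S0)" for l
    by (rule pop_meas[OF ax]) simp
  have PS: "?P l \<omega> \<in> ?S0" for l \<omega> by (rule pop_S0[OF ax])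
  define Abl where "Abl l b = {\<omega>\<in>space M. ?P l \<omega> = b}" for l b
  define G where "G l b = {\<omega>\<in>space M. cnt ?wo (\<lambda>p. U l p \<omega>) b \<noteq> K}" for l b
  define Bad where "Bad l = {\<omega>\<in>space M. ?P l \<omega> \<noteq> hh E K}" for l
  have Ablm: "Abl l b \<in> sets M" for l b
  proof -
    have "Abl l b = (\<lambda>\<omega>. ?P l \<omega>) -` ({b} \<inter> ?S0) \<inter> space M" unfolding Abl_def using PS by auto
    also have "\<dots> \<in> sets M" by (rule measurable_sets[OF Pm]) auto
    finally show ?thesis .
  qed
  have cm: "(\<lambda>\<omega>. cnt ?wo (\<lambda>p. U l p \<omega>) b) \<in> measurable M (count_space UNIV)" for l b
    by (rule cnt_meas) simp
  have Gm: "G l b \<in> sets M" for l b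
  proof -
    have "G l b = (\<lambda>\<omega>. cnt ?wo (\<lambda>p. U l p \<omega>) b) -` {k. k \<noteq> K} \<inter> space M" unfolding G_def by auto
    also have "\<dots> \<in> sets M" by (rule measurable_sets[OF cm]) auto
    finally show ?thesis .
  qed
  have Gb: "prob (G l b) \<le> 1 - piv ?wo K b" if "b \<in> ?S0" for l b
  proof -
    have "G l b = space M - {\<omega>\<in>space M. cnt ?wo (\<lambda>p. U l p \<omega>) b = K}" unfolding G_def by auto
    moreover have "{\<omega>\<in>space M. cnt ?wo (\<lambda>p. U l p \<omega>) b = K} \<in> sets M"
    proof -
      have "{\<omega>\<in>space M. cnt ?wo (\<lambda>p. U l p \<omega>) b = K} = (\<lambda>\<omega>. cnt ?wo (\<lambda>p. U l p \<omega>) b) -` {K} \<inter> space M" by auto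
      also have "\<dots> \<in> sets M" by (rule measurable_sets[OF cm]) auto
      finally show ?thesis .
    qed
    ultimately have "prob (G l b) = 1 - prob {\<omega>\<in>space M. cnt ?wo (\<lambda>p. U l p \<omega>) b = K}"
      by (simp add: prob_compl)
    moreover have "prob {\<omega>\<in>space M. cnt ?wo (\<lambda>p. U l p \<omega>) b = K} \<ge> piv ?wo K b"
      using bprops[OF that] by (intro hit_prob[OF wo]) auto
    ultimately show ?thesis by simp
  qed
  have qb: "prob (G l b) \<le> (if b = hh E K then 0 else q)" if "b \<in> ?S0" for l b
    using Gb[OF that, of l] qge[OF that] pivK by auto
  have step: "prob (Bad (Suc l)) \<le> q * prob (Bad l)" for l
  proof -
    have "Bad (Suc l) \<subseteq> (\<Union>b\<in>?S0. Abl l b \<inter> G l b)"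
    proof
      fix \<omega> assume w: "\<omega> \<in> Bad (Suc l)"
      then have "\<omega> \<in> Abl l (?P l \<omega>)" "\<omega> \<in> G l (?P l \<omega>)"
        unfolding Bad_def Abl_def G_def pop_Suc[OF wo] by auto
      then show "\<omega> \<in> (\<Union>b\<in>?S0. Abl l b \<inter> G l b)" using PS by blast
    qed
    then have "prob (Bad (Suc l)) \<le> prob (\<Union>b\<in>?S0. Abl l b \<inter> G l b)"
      using Ablm Gm S0_finite by (intro finite_measure_mono) auto
    also have "\<dots> \<le> (\<Sum>b\<in>?S0. prob (Abl l b \<inter> G l b))"
      using Ablm Gm S0_finite by (intro finite_measure_subadditive_finite) auto
    also have "\<dots> = (\<Sum>b\<in>?S0. prob (Abl l b) * prob (G l b))"
      unfolding Abl_def G_def by (rule sum.cong[OF refl]) (rule indep_step[OF ax])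
    also have "\<dots> \<le> (\<Sum>b\<in>?S0. prob (Abl l b) * (if b = hh E K then 0 else q))"
    proof (rule sum_mono)
      fix b assume "b \<in> ?S0"
      then have "prob (G l b) \<le> (if b = hh E K then 0 else q)" by (rule qb)
      then show "prob (Abl l b) * prob (G l b) \<le> prob (Abl l b) * (if b = hh E K then 0 else q)"
        by (rule mult_left_mono) simp
    qed
    also have "\<dots> = (\<Sum>b\<in>?S0 - {hh E K}. prob (Abl l b) * q)"
      by (subst sum.remove[OF S0_finite hKS]) (auto intro: sum.cong)
    also have "\<dots> = q * prob (\<Union>b\<in>?S0 - {hh E K}. Abl l b)"
      using Ablm S0_finite
      by (subst finite_measure_finite_Union) (auto simp: disjoint_family_on_def Abl_def sum_distrib_left mult.commute)
    also have "(\<Union>b\<in>?S0 - {hh E K}. Abl l b) = Bad l"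
      unfolding Abl_def Bad_def using PS by auto
    finally show ?thesis .
  qed
  show "prob (Bad l) \<le> q ^ l" for l
  proof (induction l)
    case 0
    then show ?case by simp
  next
    case (Suc l)
    have "prob (Bad (Suc l)) \<le> q * prob (Bad l)" by (rule step)
    also have "\<dots> \<le> q * q ^ l" using Suc q0 by (intro mult_left_mono)
    finally show ?case by simp
  qed
qed
end

theorem proposition3:
  fixes M :: "'a measure" and U :: "nat \<Rightarrow> nat \<Rightarrow> 'a \<Rightarrow> real"
    and E S :: real and Nobj :: nat and ws0 :: "real list"
  assumes "prob_space M"
    and indep: "prob_space.indep_vars M (\<lambda>_. borel) (\<lambda>i. U (fst i) (snd i)) UNIV"
    and unif: "\<And>l p. distr M borel (U l p) = uniform_measure lborel {0<..<1}"
    and "E > 0" and "S > 0" and "Nobj > 0"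
    and pos: "\<forall>w\<in>set ws0. w > 0" and sum: "sum_list ws0 = E"
    and "S * real Nobj / (E + S) \<in> \<nat>"
    and "Nvol E S Nobj > 1"
  shows "(\<forall>l. {\<omega> \<in> space M. Nvol E S Nobj + length (population E S Nobj ws0 (\<lambda>l p. U l p \<omega>) l) \<noteq> Nobj} \<in> sets M)
    \<and> ((\<lambda>l. measure M {\<omega> \<in> space M. Nvol E S Nobj + length (population E S Nobj ws0 (\<lambda>l p. U l p \<omega>) l) = Nobj}) \<longlonglongrightarrow> 1)
    \<and> (\<exists>c>0. \<forall>l. measure M {\<omega> \<in> space M. Nvol E S Nobj + length (population E S Nobj ws0 (\<lambda>l p. U l p \<omega>) l) \<noteq> Nobj}
                 \<le> exp (- (real l * c)))"
proof -
  let ?wo = "wobj E S Nobj"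
  let ?nv = "Nvol E S Nobj"
  let ?P = "\<lambda>l \<omega>. population E S Nobj ws0 (\<lambda>l p. U l p \<omega>) l"
  interpret rrsetup M U
    using assms(1) indep unif by (simp add: rrsetup_def rrsetup_axioms_def)
  have wo: "?wo > 0" using assms(4-6) by (simp add: wobj_def)
  obtain m :: nat where m: "S * real Nobj / (E + S) = real m" using assms(9) by (auto elim: Nats_cases)
  have Sw: "S / ?wo = real m" using m assms(4-6) by (simp add: wobj_def field_simps)
  have nvm: "?nv = max 1 m" unfolding Nvol_def Sw by simp
  then have nvm': "?nv = m" using assms(10) by simp
  have Snv: "S = real ?nv * ?wo" using Sw nvm' wo by (simp add: field_simps)
  have tot: "E + S = real Nobj * ?wo" using assms(4-6) by (simp add: wobj_def)
  define K where "K = Nobj - ?nv"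
  have "real ?nv * ?wo < real Nobj * ?wo" using Snv tot assms(4) by linarith
  then have nvlt: "?nv < Nobj" using wo by simp
  then have EK: "E = real K * ?wo" using Snv tot by (simp add: K_def of_nat_diff algebra_simps)
  have K1: "K \<ge> 1" using nvlt by (simp add: K_def)
  note ax = wo EK K1 pos sum
  define q where "q = Max ((\<lambda>b. 1 - piv ?wo K b) ` S0 E K ws0)"
  note MB = main_bound[OF ax, folded q_def]
  have q0: "0 \<le> q" and q1: "q < 1" using MB(1,2) .
  define bad where "bad l = {\<omega> \<in> space M. ?nv + length (?P l \<omega>) \<noteq> Nobj}" for l
  have lenK: "length (hh E K) = K" using K1 by (simp add: hh_def)
  have badsub: "bad l \<subseteq> {\<omega>\<in>space M. population E S Nobj ws0 (\<lambda>j p. U j p \<omega>) l \<noteq> hh E K}" for l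
    unfolding bad_def using lenK nvlt by (auto simp: K_def)
  have Pm: "(\<lambda>\<omega>. ?P l \<omega>) \<in> measurable M (count_space (S0 E K ws0))" for l
    by (rule pop_meas[OF ax]) simp
  have PS: "?P l \<omega> \<in> S0 E K ws0" for l \<omega> by (rule pop_S0[OF ax])
  have badm: "bad l \<in> sets M" for l
  proof -
    have "bad l = (\<lambda>\<omega>. ?P l \<omega>) -` {b\<in>S0 E K ws0. ?nv + length b \<noteq> Nobj} \<inter> space M"
      unfolding bad_def using PS by auto
    also have "\<dots> \<in> sets M" by (rule measurable_sets[OF Pm]) auto
    finally show ?thesis .
  qed
  have goodm: "{\<omega> \<in> space M. ?nv + length (?P l \<omega>) = Nobj} \<in> sets M" for l
  proof -
    have "{\<omega> \<in> space M. ?nv + length (?P l \<omega>) = Nobj} = space M - bad l" unfolding bad_def by auto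
    then show ?thesis using badm by simp
  qed
  have badb: "prob (bad l) \<le> q ^ l" for l
  proof -
    have "prob (bad l) \<le> prob {\<omega>\<in>space M. population E S Nobj ws0 (\<lambda>j p. U j p \<omega>) l \<noteq> hh E K}"
    proof (rule finite_measure_mono[OF badsub])
      have "{\<omega>\<in>space M. population E S Nobj ws0 (\<lambda>j p. U j p \<omega>) l \<noteq> hh E K}
          = (\<lambda>\<omega>. ?P l \<omega>) -` (S0 E K ws0 - {hh E K}) \<inter> space M" using PS by auto
      also have "\<dots> \<in> sets M" by (rule measurable_sets[OF Pm]) auto
      finally show "{\<omega>\<in>space M. population E S Nobj ws0 (\<lambda>j p. U j p \<omega>) l \<noteq> hh E K} \<in> sets M" .
    qed
    also have "\<dots> \<le> q ^ l" by (rule MB(3))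
    finally show ?thesis .
  qed
  have good: "prob {\<omega> \<in> space M. ?nv + length (?P l \<omega>) = Nobj} = 1 - prob (bad l)" for l
  proof -
    have "{\<omega> \<in> space M. ?nv + length (?P l \<omega>) = Nobj} = space M - bad l" unfolding bad_def by auto
    then show ?thesis using badm by (simp add: prob_compl)
  qed
  show ?thesis
  proof (intro conjI)
    show "\<forall>l. {\<omega> \<in> space M. ?nv + length (?P l \<omega>) \<noteq> Nobj} \<in> sets M"
      using badm unfolding bad_def by blast
  next
    have qz: "(\<lambda>l. q ^ l) \<longlonglongrightarrow> 0" using q0 q1 by (intro LIMSEQ_power_zero) simp
    have "(\<lambda>l. 1 - q ^ l) \<longlonglongrightarrow> 1 - 0" by (intro tendsto_intros qz)
    then have l1: "(\<lambda>l. 1 - q ^ l) \<longlonglongrightarrow> 1" by simp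
    show "(\<lambda>l. prob {\<omega> \<in> space M. ?nv + length (?P l \<omega>) = Nobj}) \<longlonglongrightarrow> 1"
    proof (rule tendsto_sandwich[OF _ _ l1 tendsto_const])
      show "\<forall>\<^sub>F l in sequentially. 1 - q ^ l \<le> prob {\<omega> \<in> space M. ?nv + length (?P l \<omega>) = Nobj}"
      proof (intro always_eventually allI)
        fix l
        show "1 - q ^ l \<le> prob {\<omega> \<in> space M. ?nv + length (?P l \<omega>) = Nobj}"
          using badb[of l] good[of l] by linarith
      qed
      show "\<forall>\<^sub>F l in sequentially. prob {\<omega> \<in> space M. ?nv + length (?P l \<omega>) = Nobj} \<le> 1"
        by (intro always_eventually allI) simp
    qed
  next
    define c where "c = (if q = 0 then 1 else - ln q)"
    have c0: "c > 0" unfolding c_def using q0 q1 by auto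
    have "q ^ l \<le> exp (- (real l * c))" for l
    proof (cases "q = 0")
      case True
      then show ?thesis by (cases l) auto
    next
      case False
      then have "q > 0" using q0 by simp
      have "exp (- (real l * c)) = exp (real l * ln q)"
        unfolding c_def using False by simp
      also have "\<dots> = exp (ln q) ^ l" by (rule exp_of_nat_mult)
      also have "\<dots> = q ^ l" using \<open>q > 0\<close> by simp
      finally show ?thesis by simp
    qed
    then have "prob (bad l) \<le> exp (- (real l * c))" for l using badb order_trans by blast
    then show "\<exists>c>0. \<forall>l. prob {\<omega> \<in> space M. ?nv + length (?P l \<omega>) \<noteq> Nobj} \<le> exp (- (real l * c))"
      using c0 unfolding bad_def by blast
  qed
qed

end
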